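(* Let $\Gamma=\mathbb{Z}^\ell$, let $\sigma:\Gamma\to\Gamma$ be a group homomorphism, let $\mathcal{A}$ be a finite list of elements of $\Gamma$ and $\sigma(\mathcal{A})$ the list of images, and let $G=(S^1)^p\times\mathbb{R}^q$ with $p>0$. Then $$\chi^G_{\sigma(\mathcal{A})}(0)=|\det(\sigma)|^p\cdot\chi^G_{\mathcal{A}}(0).$$
   Context: For a sublist $\mathcal{S}$ (sublists distinguished by index) of a finite list in a finitely generated abelian group $\Gamma$: $r_{\mathcal{S}}$ is the rank of $\langle\mathcal{S}\rangle$, $m(\mathcal{S};G)=\#\mathrm{Hom}((\Gamma/\langle\mathcal{S}\rangle)_{\mathrm{tor}},G)$, and the $G$-characteristic polynomial is $\chi^G_{\mathcal{A}}(t)=\sum_{\mathcal{S}\subset\mathcal{A}}(-1)^{\#\mathcal{S}}m(\mathcal{S};G)\,t^{r_\Gamma-r_{\mathcal{S}}}$, where $r_\Gamma$ is the rank of $\Gamma$. *)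

theory Defs
  imports "HOL-Analysis.Analysis" "HOL-Computational_Algebra.Polynomial"
begin

text \<open>The ambient group Gamma = Z^l is modelled as int ^ 'n (l = CARD('n)).\<close>

definition zspan :: "(int ^ 'n) set \<Rightarrow> (int ^ 'n) set" where
  "zspan X = {v. \<exists>F c. finite F \<and> F \<subseteq> X \<and> v = (\<Sum>x\<in>F. c x *s x)}"

text \<open>Subgroup generated by the sublist of A with index set S.\<close>
definition gen_sub :: "(int ^ 'n) list \<Rightarrow> nat set \<Rightarrow> (int ^ 'n) set" where
  "gen_sub A S = zspan {A ! i | i. i \<in> S \<and> i < length A}"

definition zindep :: "(int ^ 'n) set \<Rightarrow> bool" where
  "zindep L \<longleftrightarrow> (\<forall>c. (\<Sum>v\<in>L. c v *s v) = 0 \<longrightarrow> (\<forall>v\<in>L. c v = 0))"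

text \<open>Rank of a subgroup: maximal number of Z-linearly independent elements.\<close>
definition zrank :: "(int ^ 'n) set \<Rightarrow> nat" where
  "zrank H = Max {card L | L. finite L \<and> L \<subseteq> H \<and> zindep L}"

definition coset :: "(int ^ 'n) set \<Rightarrow> int ^ 'n \<Rightarrow> (int ^ 'n) set" where
  "coset H x = {x + h | h. h \<in> H}"

text \<open>Torsion subgroup of Gamma / H, as a set of cosets.\<close>
definition tor_quot :: "(int ^ 'n) set \<Rightarrow> (int ^ 'n) set set" where
  "tor_quot H = {coset H x | x. \<exists>n::int. n > 0 \<and> n *s x \<in> H}"

text \<open>The group G = (S^1)^p x R^q, elements (z, r) with z i = 1 for i >= p,
  r i = 0 for i >= q.\<close>
definition G_carrier :: "nat \<Rightarrow> nat \<Rightarrow> ((nat \<Rightarrow> complex) \<times> (nat \<Rightarrow> real)) set" where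
  "G_carrier p q = {(z, r). (\<forall>i<p. norm (z i) = 1) \<and> (\<forall>i\<ge>p. z i = 1) \<and> (\<forall>i\<ge>q. r i = 0)}"

definition G_op :: "((nat \<Rightarrow> complex) \<times> (nat \<Rightarrow> real)) \<Rightarrow> ((nat \<Rightarrow> complex) \<times> (nat \<Rightarrow> real))
    \<Rightarrow> ((nat \<Rightarrow> complex) \<times> (nat \<Rightarrow> real))" where
  "G_op a b = ((\<lambda>i. fst a i * fst b i), (\<lambda>i. snd a i + snd b i))"

text \<open>Hom((Gamma/H)_tor, G).\<close>
definition hom_tor :: "(int ^ 'n) set \<Rightarrow> nat \<Rightarrow> nat \<Rightarrow>
    ((int ^ 'n) set \<Rightarrow> (nat \<Rightarrow> complex) \<times> (nat \<Rightarrow> real)) set" where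
  "hom_tor H p q = {\<phi>. \<phi> \<in> extensional (tor_quot H) \<and>
      (\<forall>c\<in>tor_quot H. \<phi> c \<in> G_carrier p q) \<and>
      (\<forall>x y. coset H x \<in> tor_quot H \<longrightarrow> coset H y \<in> tor_quot H \<longrightarrow>
          \<phi> (coset H (x + y)) = G_op (\<phi> (coset H x)) (\<phi> (coset H y)))}"

definition mult_G :: "(int ^ 'n) list \<Rightarrow> nat set \<Rightarrow> nat \<Rightarrow> nat \<Rightarrow> nat" where
  "mult_G A S p q = card (hom_tor (gen_sub A S) p q)"

text \<open>G-characteristic polynomial, sum over sublists (index sets).\<close>
definition char_poly_G :: "nat \<Rightarrow> nat \<Rightarrow> (int ^ 'n) list \<Rightarrow> int poly" where
  "char_poly_G p q A = (\<Sum>S\<in>Pow {..<length A}.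
     monom ((-1) ^ card S * int (mult_G A S p q))
           (zrank (UNIV :: (int ^ 'n) set) - zrank (gen_sub A S)))"

text \<open>Matrix of an endomorphism of Z^l (columns = images of basis vectors).\<close>
definition hom_matrix :: "(int ^ 'n \<Rightarrow> int ^ 'n) \<Rightarrow> int ^ 'n ^ 'n" where
  "hom_matrix \<sigma> = (\<chi> i j. \<sigma> (axis j 1) $ i)"

end

theory Submission
  imports Defs
begin


section \<open>Additive maps\<close>

lemma smult_Suc: "(of_nat (Suc n) :: int) *s (x::int^'n) = x + of_nat n *s x"
  by (simp add: vec_eq_iff algebra_simps)

locale addhom =
  fixes \<sigma> :: "int ^ 'n::finite \<Rightarrow> int ^ 'n"
  assumes hom: "\<And>x y. \<sigma> (x + y) = \<sigma> x + \<sigma> y"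
begin

lemma zero[simp]: "\<sigma> 0 = 0"
  using hom[of 0 0] by simp

lemma neg: "\<sigma> (- x) = - \<sigma> x"
proof -
  have "\<sigma> x + \<sigma> (-x) = 0" using hom[of x "-x"] by simp
  then show ?thesis by (metis add.commute add_eq_0_iff)
qed

lemma smult_nat: "\<sigma> (of_nat n *s x) = of_nat n *s \<sigma> x"
  by (induction n) (auto simp: smult_Suc hom)

lemma smult: "\<sigma> (k *s x) = k *s \<sigma> x"
proof (cases "k \<ge> 0")
  case True
  then show ?thesis using smult_nat[of "nat k" x] by simp
next
  case False
  define m where "m = nat (-k)"
  have k: "k = - of_nat m" using False unfolding m_def by simp
  have "k *s x = - (of_nat m *s x)" unfolding k by (simp add: vec_eq_iff)
  moreover have "k *s \<sigma> x = - (of_nat m *s \<sigma> x)" unfolding k by (simp add: vec_eq_iff)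
  ultimately show ?thesis by (simp add: neg smult_nat)
qed

lemma sum: "\<sigma> (\<Sum>x\<in>F. f x) = (\<Sum>x\<in>F. \<sigma> (f x))"
  by (induction F rule: infinite_finite_induct) (auto simp: hom)

lemma diff: "\<sigma> (x - y) = \<sigma> x - \<sigma> y"
  using hom[of x "-y"] by (simp add: neg)

lemma axis_expand: "(x::int^'n) = (\<Sum>j\<in>UNIV. x$j *s axis j 1)"
  by (simp add: vec_eq_iff axis_def if_distrib cong: if_cong)

lemma matrix_eq: "\<sigma> x = hom_matrix \<sigma> *v x"
proof -
  have "\<sigma> x = (\<Sum>j\<in>UNIV. x$j *s \<sigma> (axis j 1))"
    by (subst axis_expand) (simp add: sum smult)
  then show ?thesis
    by (simp add: vec_eq_iff matrix_vector_mult_def hom_matrix_def mult.commute)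
qed

end

section \<open>Subgroups and spans\<close>

definition subg :: "(int^'n) set \<Rightarrow> bool" where
  "subg H \<longleftrightarrow> 0 \<in> H \<and> (\<forall>x\<in>H. \<forall>y\<in>H. x + y \<in> H) \<and> (\<forall>k. \<forall>x\<in>H. k *s x \<in> H)"

lemma subg_sum: "subg H \<Longrightarrow> (\<And>v. v \<in> F \<Longrightarrow> f v \<in> H) \<Longrightarrow> sum f F \<in> H"
  by (induction F rule: infinite_finite_induct) (auto simp: subg_def)

lemma subg_neg: "subg H \<Longrightarrow> x \<in> H \<Longrightarrow> - x \<in> H"
  unfolding subg_def by (metis scaleR_minus1_left vector_sneg_minus1)

lemma subg_diff: "subg H \<Longrightarrow> x \<in> H \<Longrightarrow> y \<in> H \<Longrightarrow> x - y \<in> H"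
  using subg_neg[of H y] unfolding subg_def by (metis diff_conv_add_uminus)

lemma zspan_base: "x \<in> X \<Longrightarrow> x \<in> zspan X"
  unfolding zspan_def by (rule CollectI, rule exI[of _ "{x}"], rule exI[of _ "\<lambda>_. 1"]) simp

lemma subg_zspan: "subg (zspan X)"
  unfolding subg_def
proof (intro conjI ballI allI)
  show "0 \<in> zspan X" unfolding zspan_def by (rule CollectI, rule exI[of _ "{}"]) simp
next
  fix x y assume "x \<in> zspan X" "y \<in> zspan X"
  then obtain F c G d where F: "finite F" "F \<subseteq> X" "x = (\<Sum>v\<in>F. c v *s v)"
    and G: "finite G" "G \<subseteq> X" "y = (\<Sum>v\<in>G. d v *s v)"
    unfolding zspan_def by blast
  let ?e = "\<lambda>v. (if v \<in> F then c v else 0) + (if v \<in> G then d v else 0)"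
  have "(\<Sum>v\<in>F\<union>G. ?e v *s v) = (\<Sum>v\<in>F\<union>G. (if v \<in> F then c v *s v else 0)) + (\<Sum>v\<in>F\<union>G. (if v \<in> G then d v *s v else 0))"
    unfolding sum.distrib[symmetric] by (rule sum.cong) (auto simp: vector_sadd_rdistrib)
  also have "\<dots> = x + y"
    using F G by (simp add: sum.inter_restrict[symmetric] Int_absorb1 Int_absorb2)
  finally have e: "x + y = (\<Sum>v\<in>F\<union>G. ?e v *s v)" by simp
  show "x + y \<in> zspan X" unfolding zspan_def
    by (rule CollectI, rule exI[of _ "F\<union>G"], rule exI[of _ ?e]) (use F(1,2) G(1,2) e in simp)
next
  fix k x assume "x \<in> zspan X"
  then obtain F c where F: "finite F" "F \<subseteq> X" "x = (\<Sum>v\<in>F. c v *s v)"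
    unfolding zspan_def by blast
  have e: "k *s x = (\<Sum>v\<in>F. (k * c v) *s v)"
    using F by (simp add: vec_eq_iff sum_distrib_left mult.assoc)
  show "k *s x \<in> zspan X" unfolding zspan_def
    by (rule CollectI, rule exI[of _ F], rule exI[of _ "\<lambda>v. k * c v"]) (use F e in simp)
qed

lemma zspan_lincomb: "finite L \<Longrightarrow> L \<subseteq> zspan X \<Longrightarrow> (\<Sum>v\<in>L. c v *s v) \<in> zspan X"
  using subg_zspan[of X] by (intro subg_sum) (auto simp: subg_def)

lemma (in addhom) zspan_image: "zspan (\<sigma> ` X) = \<sigma> ` zspan X"
proof
  show "\<sigma> ` zspan X \<subseteq> zspan (\<sigma> ` X)"
  proof
    fix w assume "w \<in> \<sigma> ` zspan X"
    then obtain F c where F: "finite F" "F \<subseteq> X" "w = \<sigma> (\<Sum>v\<in>F. c v *s v)"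
      unfolding zspan_def by blast
    have w: "w = (\<Sum>v\<in>F. c v *s \<sigma> v)" using F by (simp add: sum smult)
    have "c v *s \<sigma> v \<in> zspan (\<sigma> ` X)" if "v \<in> F" for v
    proof -
      have "\<sigma> v \<in> zspan (\<sigma> ` X)" using F(2) that by (intro zspan_base) blast
      then show ?thesis using subg_zspan[of "\<sigma> ` X"] unfolding subg_def by blast
    qed
    then have "w \<in> zspan (\<sigma> ` X)" unfolding w by (rule subg_sum[OF subg_zspan])
    then show "w \<in> zspan (\<sigma> ` X)" .
  qed
next
  show "zspan (\<sigma> ` X) \<subseteq> \<sigma> ` zspan X"
  proof
    fix w assume "w \<in> zspan (\<sigma> ` X)"
    then obtain F c where F: "finite F" "F \<subseteq> \<sigma> ` X" "w = (\<Sum>v\<in>F. c v *s v)"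
      unfolding zspan_def by blast
    define g where "g y = (SOME x. x \<in> X \<and> \<sigma> x = y)" for y
    have g: "g y \<in> X \<and> \<sigma> (g y) = y" if "y \<in> F" for y
    proof -
      have "\<exists>x. x \<in> X \<and> \<sigma> x = y" using F(2) that by blast
      then show ?thesis unfolding g_def by (rule someI_ex)
    qed
    have inj: "inj_on g F"
    proof (rule inj_onI)
      fix a b assume a: "a \<in> F" and b: "b \<in> F" and e: "g a = g b"
      then have "\<sigma> (g a) = \<sigma> (g b)" by simp
      then show "a = b" using g[OF a] g[OF b] by simp
    qed
    have "\<sigma> (\<Sum>x\<in>g ` F. c (\<sigma> x) *s x) = (\<Sum>x\<in>g ` F. c (\<sigma> x) *s \<sigma> x)" by (simp add: sum smult)
    also have "\<dots> = w" using F(3) g by (simp add: sum.reindex[OF inj])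
    finally have "w = \<sigma> (\<Sum>x\<in>g ` F. c (\<sigma> x) *s x)" by simp
    moreover have "(\<Sum>x\<in>g ` F. c (\<sigma> x) *s x) \<in> zspan X"
      unfolding zspan_def
      by (rule CollectI, rule exI[of _ "g ` F"], rule exI[of _ "\<lambda>x. c (\<sigma> x)"]) (use F(1) g in auto)
    ultimately show "w \<in> \<sigma> ` zspan X" by (rule image_eqI)
  qed
qed



section \<open>Rational embedding\<close>

definition qv :: "int^'n \<Rightarrow> rat^'n" where
  "qv x = (\<chi> i. of_int (x$i))"

definition qm :: "int^'n^'m \<Rightarrow> rat^'n^'m" where
  "qm M = (\<chi> i j. of_int (M$i$j))"

lemma qv_inj: "inj qv"
  by (rule injI) (simp add: qv_def vec_eq_iff)

lemma qv_zero[simp]: "qv 0 = 0"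
  by (simp add: qv_def vec_eq_iff)

lemma qv_smult: "qv (k *s x) = of_int k *s qv x"
  by (simp add: qv_def vec_eq_iff)

lemma qv_sum: "qv (\<Sum>v\<in>F. f v) = (\<Sum>v\<in>F. qv (f v))"
  by (simp add: qv_def vec_eq_iff)

lemma qm_mult: "qm M *v qv x = qv (M *v x)"
  by (simp add: qm_def qv_def vec_eq_iff matrix_vector_mult_def)

lemma det_qm: "det (qm (M::int^'n::finite^'n)) = of_int (det M)"
  unfolding det_def qm_def by (simp add: of_int_sum of_int_prod)

lemma common_denom: "finite F \<Longrightarrow> \<exists>D::int. D > 0 \<and> (\<forall>q\<in>F. of_int D * (q::rat) \<in> \<int>)"
proof (induction F rule: finite_induct)
  case empty
  then show ?case by (intro exI[of _ 1]) simp
next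
  case (insert q F)
  then obtain D where D: "D > 0" "\<forall>q\<in>F. of_int D * q \<in> \<int>" by blast
  obtain a b where qb: "quotient_of q = (a, b)" by (cases "quotient_of q")
  have b: "b > 0" using qb by (rule quotient_of_denom_pos)
  have q: "q = of_int a / of_int b" using qb by (rule quotient_of_div)
  have e: "of_int (D * b) * q = (of_int (D * a) :: rat)" using b unfolding q by simp
  have 1: "of_int (D * b) * q \<in> \<int>" unfolding e by (rule Ints_of_int)
  have 2: "of_int (D * b) * q' \<in> \<int>" if "q' \<in> F" for q'
  proof -
    have e: "of_int (D * b) * q' = of_int b * (of_int D * q')" by simp
    have "of_int D * q' \<in> \<int>" using D(2) that by blast
    then show ?thesis unfolding e by (rule Ints_mult[OF Ints_of_int])
  qed
  show ?case using 1 2 D(1) b by (intro exI[of _ "D * b"]) simp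
qed

section \<open>Rank\<close>

lemma zindep_card:
  assumes fin: "finite L" and ind: "zindep (L :: (int^'n::finite) set)"
  shows "card L \<le> CARD('n)"
proof -
  have injL: "inj_on qv L" using qv_inj by (rule inj_on_subset) simp
  have "vec.independent (qv ` L)"
    unfolding vec.independent_explicit
  proof (intro conjI allI impI ballI)
    show "finite (qv ` L)" using fin by simp
  next
    fix c w assume s: "(\<Sum>w\<in>qv ` L. c w *s w) = 0" and w: "w \<in> qv ` L"
    obtain D where D: "D > 0" "\<forall>q\<in>(\<lambda>v. c (qv v)) ` L. of_int D * q \<in> \<int>"
      using common_denom[of "(\<lambda>v. c (qv v)) ` L"] fin by blast
    define d where "d v = \<lfloor>of_int D * c (qv v)\<rfloor>" for v
    have dv: "of_int (d v) = of_int D * c (qv v)" if "v \<in> L" for v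
    proof -
      have "of_int D * c (qv v) \<in> \<int>" using D(2) that by blast
      then obtain m where m: "of_int D * c (qv v) = of_int m" by (elim Ints_cases)
      show ?thesis unfolding d_def m by simp
    qed
    have "qv (\<Sum>v\<in>L. d v *s v) = (\<Sum>v\<in>L. of_int (d v) *s qv v)"
      by (simp add: qv_sum qv_smult)
    also have "\<dots> = (\<Sum>v\<in>L. (of_int D * c (qv v)) *s qv v)"
      by (rule sum.cong) (simp_all add: dv)
    also have "\<dots> = of_int D *s (\<Sum>v\<in>L. c (qv v) *s qv v)"
      by (simp add: vec_eq_iff sum_distrib_left mult.assoc)
    also have "(\<Sum>v\<in>L. c (qv v) *s qv v) = (\<Sum>w\<in>qv ` L. c w *s w)"
      by (simp add: sum.reindex[OF injL])
    also have "\<dots> = 0" by (rule s)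
    finally have "qv (\<Sum>v\<in>L. d v *s v) = qv 0" by simp
    then have "(\<Sum>v\<in>L. d v *s v) = 0" by (rule injD[OF qv_inj])
    then have d0: "\<forall>v\<in>L. d v = 0" using ind unfolding zindep_def by blast
    obtain v where v: "v \<in> L" "w = qv v" using w by blast
    have "of_int D * c w = 0" using dv[OF v(1)] d0 v by simp
    then show "c w = 0" using D(1) by simp
  qed
  then have "card (qv ` L) \<le> vec.dim (UNIV :: (rat^'n) set)"
    by (intro vec.independent_card_le_dim) auto
  then show ?thesis using card_image[OF injL] by (simp add: card_cart_basis)
qed

definition Rk :: "(int^'n) set \<Rightarrow> nat set" where
  "Rk H = {card L | L. finite L \<and> L \<subseteq> H \<and> zindep L}"

lemma Rk_sub: "Rk (H :: (int^'n::finite) set) \<subseteq> {..CARD('n)}"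
  unfolding Rk_def using zindep_card by auto

lemma Rk_fin: "finite (Rk (H :: (int^'n::finite) set))"
  using Rk_sub finite_subset by blast

lemma Rk_ne: "Rk (H :: (int^'n) set) \<noteq> {}"
proof -
  have "zindep ({} :: (int^'n) set)" unfolding zindep_def by simp
  then have "card ({} :: (int^'n) set) \<in> Rk H" unfolding Rk_def by blast
  then show ?thesis by blast
qed

lemma zrank_Rk: "zrank H = Max (Rk H)"
  unfolding zrank_def Rk_def ..

lemma zrank_le: "zrank (H :: (int^'n::finite) set) \<le> CARD('n)"
  unfolding zrank_Rk using Rk_sub Rk_fin Rk_ne by (meson Max_in atMost_iff subsetD)

lemma zrank_attained:
  "\<exists>L. finite L \<and> L \<subseteq> H \<and> zindep L \<and> card L = zrank (H :: (int^'n::finite) set)"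
proof -
  have "zrank H \<in> Rk H" unfolding zrank_Rk using Rk_fin Rk_ne by (rule Max_in)
  then obtain L where L: "zrank H = card L" "finite L" "L \<subseteq> H" "zindep L"
    unfolding Rk_def by blast
  show ?thesis using L by (intro exI[of _ L]) simp
qed

lemma zrank_ge:
  "finite L \<Longrightarrow> L \<subseteq> H \<Longrightarrow> zindep L \<Longrightarrow> card L \<le> zrank (H :: (int^'n::finite) set)"
  unfolding zrank_Rk using Rk_fin by (intro Max_ge) (auto simp: Rk_def)

lemma zrank_UNIV: "zrank (UNIV :: (int^'n::finite) set) = CARD('n)"
proof (rule antisym)
  show "zrank (UNIV :: (int^'n::finite) set) \<le> CARD('n)" by (rule zrank_le)
next
  let ?e = "\<lambda>j::'n. axis j (1::int)"
  have inj: "inj ?e" by (rule injI) (simp add: axis_eq_axis)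
  have ind: "zindep (range ?e)"
    unfolding zindep_def
  proof (intro allI impI ballI)
    fix c w assume s: "(\<Sum>v\<in>range ?e. c v *s v) = 0" and w: "w \<in> range ?e"
    then obtain j where j: "w = ?e j" by blast
    have "(\<Sum>l\<in>UNIV. c (?e l) *s ?e l) = 0" using s by (simp add: sum.reindex[OF inj])
    then have "(\<Sum>l\<in>UNIV. c (?e l) *s ?e l) $ j = 0" by simp
    then show "c w = 0" unfolding j by (simp add: axis_def if_distrib cong: if_cong)
  qed
  have "card (range ?e) \<le> zrank (UNIV :: (int^'n::finite) set)"
    using ind by (intro zrank_ge) auto
  then show "CARD('n) \<le> zrank (UNIV :: (int^'n::finite) set)"
    using card_image[OF inj] by simp
qed

lemma full_torsion:
  assumes H: "subg H" and r: "zrank (H :: (int^'n::finite) set) = CARD('n)"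
  shows "\<exists>k>0. k *s x \<in> H"
proof -
  obtain L where L: "finite L" "L \<subseteq> H" "zindep L" "card L = CARD('n)"
    using zrank_attained[of H] r by auto
  show ?thesis
  proof (cases "x \<in> L")
    case True
    then show ?thesis using L(2) by (intro exI[of _ 1]) auto
  next
    case False
    have "card (insert x L) = Suc CARD('n)" using False L by simp
    then have "\<not> zindep (insert x L)" using zindep_card[of "insert x L"] L(1) by auto
    then obtain c v where c: "(\<Sum>u\<in>insert x L. c u *s u) = 0" "v \<in> insert x L" "c v \<noteq> 0"
      unfolding zindep_def by blast
    have s: "c x *s x + (\<Sum>u\<in>L. c u *s u) = 0" using c(1) False L(1) by simp
    have cx: "c x \<noteq> 0"
    proof
      assume "c x = 0"
      then have "(\<Sum>u\<in>L. c u *s u) = 0" using s by simp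
      then have "\<forall>u\<in>L. c u = 0" using L(3) unfolding zindep_def by blast
      then show False using c(2,3) \<open>c x = 0\<close> by auto
    qed
    have mem: "(\<Sum>u\<in>L. c u *s u) \<in> H"
      using L(2) H by (intro subg_sum) (auto simp: subg_def)
    have eq: "c x *s x = - (\<Sum>u\<in>L. c u *s u)" using s by (simp add: eq_neg_iff_add_eq_0)
    show ?thesis
    proof (cases "c x > 0")
      case True
      then show ?thesis using subg_neg[OF H mem] eq by (intro exI[of _ "c x"]) simp
    next
      case False
      have "(- c x) *s x = (\<Sum>u\<in>L. c u *s u)" using eq by (simp add: vec_eq_iff)
      then show ?thesis using mem False cx by (intro exI[of _ "- c x"]) simp
    qed
  qed
qed

context addhom
begin

lemma zindep_image:
  assumes inj: "inj \<sigma>" and fin: "finite L"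
  shows "zindep (\<sigma> ` L) \<longleftrightarrow> zindep L"
proof
  assume ind: "zindep (\<sigma> ` L)"
  show "zindep L" unfolding zindep_def
  proof (intro allI impI ballI)
    fix c v assume s: "(\<Sum>v\<in>L. c v *s v) = 0" and v: "v \<in> L"
    let ?c = "\<lambda>w. c (inv \<sigma> w)"
    have "(\<Sum>w\<in>\<sigma> ` L. ?c w *s w) = (\<Sum>v\<in>L. c v *s \<sigma> v)"
      using inj by (simp add: sum.reindex inj_on_subset)
    also have "\<dots> = \<sigma> (\<Sum>v\<in>L. c v *s v)" by (simp add: sum smult)
    also have "\<dots> = 0" using s by simp
    finally have s2: "(\<Sum>w\<in>\<sigma> ` L. ?c w *s w) = 0" .
    have "\<forall>w\<in>\<sigma> ` L. ?c w = 0"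
      using spec[OF ind[unfolded zindep_def], of ?c] s2 by (rule mp)
    then show "c v = 0" using v inj by auto
  qed
next
  assume ind: "zindep L"
  show "zindep (\<sigma> ` L)" unfolding zindep_def
  proof (intro allI impI ballI)
    fix c w assume s: "(\<Sum>w\<in>\<sigma> ` L. c w *s w) = 0" and w: "w \<in> \<sigma> ` L"
    have "\<sigma> (\<Sum>v\<in>L. c (\<sigma> v) *s v) = (\<Sum>v\<in>L. c (\<sigma> v) *s \<sigma> v)" by (simp add: sum smult)
    also have "\<dots> = (\<Sum>w\<in>\<sigma> ` L. c w *s w)"
      using inj by (simp add: sum.reindex inj_on_subset)
    also have "\<dots> = \<sigma> 0" using s by simp
    finally have "(\<Sum>v\<in>L. c (\<sigma> v) *s v) = 0" by (rule injD[OF inj])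
    then have "\<forall>v\<in>L. c (\<sigma> v) = 0"
      using spec[OF ind[unfolded zindep_def], of "\<lambda>v. c (\<sigma> v)"] by (rule rev_mp)
    then show "c w = 0" using w by auto
  qed
qed

lemma zrank_image:
  assumes inj: "inj \<sigma>"
  shows "zrank (\<sigma> ` H) = zrank H"
proof -
  have "Rk (\<sigma> ` H) = Rk H"
  proof
    show "Rk (\<sigma> ` H) \<subseteq> Rk H"
    proof
      fix m assume "m \<in> Rk (\<sigma> ` H)"
      then obtain L where L: "m = card L" "finite L" "L \<subseteq> \<sigma> ` H" "zindep L"
        unfolding Rk_def by blast
      define L0 where "L0 = \<sigma> -` L \<inter> H"
      have img: "\<sigma> ` L0 = L" using L(3) unfolding L0_def by blast
      have fin0: "finite L0" unfolding L0_def by (rule finite_Int[OF disjI1], rule finite_vimageI[OF L(2) inj])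
      have "zindep L0" using L(4) zindep_image[OF inj fin0] img by simp
      moreover have "card L0 = m" using L(1) img inj by (metis card_image inj_on_subset subset_UNIV)
      ultimately show "m \<in> Rk H" unfolding Rk_def using fin0 unfolding L0_def by blast
    qed
  next
    show "Rk H \<subseteq> Rk (\<sigma> ` H)"
    proof
      fix m assume "m \<in> Rk H"
      then obtain L where L: "m = card L" "finite L" "L \<subseteq> H" "zindep L"
        unfolding Rk_def by blast
      have "zindep (\<sigma> ` L)" using L(4) zindep_image[OF inj L(2)] by simp
      moreover have "card (\<sigma> ` L) = m" using L(1) inj by (simp add: card_image inj_on_subset)
      ultimately show "m \<in> Rk (\<sigma> ` H)" unfolding Rk_def using L(2,3) by blast
    qed
  qed
  then show ?thesis unfolding zrank_Rk by simp
qed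

lemma det_nz_inj:
  assumes d: "det (hom_matrix \<sigma>) \<noteq> 0"
  shows "inj \<sigma>"
proof (rule injI)
  fix x y assume e: "\<sigma> x = \<sigma> y"
  let ?A = "qm (hom_matrix \<sigma>)"
  have "det (matrix ((*v) ?A)) \<noteq> 0" using d by (simp add: det_qm)
  then have injA: "inj ((*v) ?A)"
    using det_nz_iff_inj_gen[of "(*v) ?A"] by simp
  have "?A *v qv x = ?A *v qv y" unfolding qm_mult matrix_eq[symmetric] e ..
  then have "qv x = qv y" by (rule injD[OF injA])
  then show "x = y" by (rule injD[OF qv_inj])
qed

lemma det0_rank:
  assumes d: "det (hom_matrix \<sigma>) = 0"
  shows "zrank (\<sigma> ` zspan X) \<noteq> CARD('n)"
proof
  assume r: "zrank (\<sigma> ` zspan X) = CARD('n)"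
  have H: "subg (\<sigma> ` zspan X)" unfolding zspan_image[symmetric] by (rule subg_zspan)
  have ex: "\<exists>p. fst p > 0 \<and> \<sigma> (snd p) = fst p *s axis j 1" for j
  proof -
    obtain k where k: "k > 0" "k *s axis j 1 \<in> \<sigma> ` zspan X" using full_torsion[OF H r] by blast
    from k(2) obtain u where u: "k *s axis j 1 = \<sigma> u" by (rule imageE)
    show ?thesis using k(1) u by (intro exI[of _ "(k, u)"]) simp
  qed
  define k where "k j = fst (SOME p. fst p > 0 \<and> \<sigma> (snd p) = fst p *s axis j 1)" for j
  define v where "v j = snd (SOME p. fst p > 0 \<and> \<sigma> (snd p) = fst p *s axis j 1)" for j
  have kv: "k j > 0 \<and> \<sigma> (v j) = k j *s axis j 1" for j
    unfolding k_def v_def by (rule someI_ex[OF ex])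
  define V where "V = (\<chi> i j. v j $ i)"
  have "hom_matrix \<sigma> ** V = (\<chi> i j. if i = j then k j else 0)"
  proof -
    have "(hom_matrix \<sigma> ** V) $ i $ j = (hom_matrix \<sigma> *v v j) $ i" for i j
      by (simp add: matrix_matrix_mult_def matrix_vector_mult_def V_def)
    also have "(hom_matrix \<sigma> *v v j) $ i = (if i = j then k j else 0)" for i j
      unfolding matrix_eq[symmetric] using kv[of j] by (simp add: axis_def)
    finally show ?thesis by (simp add: vec_eq_iff)
  qed
  then have "det (hom_matrix \<sigma>) * det V = (\<Prod>j\<in>UNIV. k j)"
    by (simp add: det_mul[symmetric] det_diagonal)
  moreover have "(\<Prod>j\<in>UNIV. k j) \<noteq> 0" using kv by (simp add: prod_zero_iff) (metis less_irrefl)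
  ultimately show False using d by simp
qed

end



definition torus :: "('n \<Rightarrow> complex) set" where
  "torus = {t. \<forall>j. norm (t j) = 1}"

definition star :: "int^'n^'n \<Rightarrow> ('n::finite \<Rightarrow> complex) \<Rightarrow> ('n \<Rightarrow> complex)" where
  "star M t = (\<lambda>j. \<Prod>i\<in>UNIV. t i powi (M$i$j))"

definition pre :: "int^'n^'n \<Rightarrow> ('n::finite \<Rightarrow> complex) set \<Rightarrow> ('n \<Rightarrow> complex) set" where
  "pre M Y = {t \<in> torus. star M t \<in> Y}"

definition goodm :: "int^'n^'n \<Rightarrow> bool" where
  "goodm M \<longleftrightarrow> (\<forall>Y \<subseteq> (torus :: ('n::finite \<Rightarrow> complex) set). card (pre M Y) = nat \<bar>det M\<bar> * card Y)"

lemma power_int_prod: "(\<Prod>i\<in>F. f i) powi n = (\<Prod>i\<in>F. (f i :: complex) powi n)"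
  by (induction F rule: infinite_finite_induct) (auto simp: power_int_mult_distrib)

lemma power_int_sum: "(x::complex) \<noteq> 0 \<Longrightarrow> x powi (\<Sum>i\<in>F. g i) = (\<Prod>i\<in>F. x powi g i)"
  by (induction F rule: infinite_finite_induct) (simp_all add: power_int_add)

lemma torus_nz: "t \<in> torus \<Longrightarrow> t i \<noteq> 0"
proof
  assume t: "t \<in> torus" and z: "t i = 0"
  have "norm (t i) = 1" using t unfolding torus_def by blast
  then show False using z by simp
qed

lemma star_torus: "t \<in> torus \<Longrightarrow> star M t \<in> torus"
  unfolding torus_def star_def by (simp add: prod_norm[symmetric] norm_power_int)

lemma star_mult:
  assumes t: "t \<in> torus"
  shows "star (A ** B) t = star B (star A t)"
proof
  fix l
  have "star B (star A t) l = (\<Prod>j\<in>UNIV. \<Prod>i\<in>UNIV. t i powi (A$i$j * B$j$l))"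
    unfolding star_def by (simp add: power_int_prod power_int_mult)
  also have "\<dots> = (\<Prod>i\<in>UNIV. \<Prod>j\<in>UNIV. t i powi (A$i$j * B$j$l))"
    by (rule prod.swap)
  also have "\<dots> = star (A ** B) t l"
    unfolding star_def matrix_matrix_mult_def using torus_nz[OF t]
    by (simp add: power_int_sum)
  finally show "star (A ** B) t l = star B (star A t) l" by simp
qed

lemma pre_mult: "pre (A ** B) Y = pre A (pre B Y)"
  unfolding pre_def by (auto simp: star_mult star_torus)

lemma pre_torus: "pre M Y \<subseteq> torus"
  unfolding pre_def by auto

lemma goodm_mult:
  assumes "goodm A" "goodm B"
  shows "goodm (A ** B)"
  unfolding goodm_def
proof (intro allI impI)
  fix Y :: "('a \<Rightarrow> complex) set" assume Y: "Y \<subseteq> torus"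
  have "card (pre (A ** B) Y) = nat \<bar>det A\<bar> * card (pre B Y)"
    using assms(1) pre_torus unfolding pre_mult goodm_def by blast
  also have "\<dots> = nat \<bar>det A\<bar> * (nat \<bar>det B\<bar> * card Y)"
    using assms(2) Y unfolding goodm_def by simp
  also have "\<dots> = nat \<bar>det (A ** B)\<bar> * card Y"
    by (simp add: det_mul abs_mult nat_mult_distrib)
  finally show "card (pre (A ** B) Y) = nat \<bar>det (A ** B)\<bar> * card Y" .
qed

lemma goodm_cancel:
  assumes "goodm E" "\<bar>det E\<bar> = 1" "goodm (E ** M)"
  shows "goodm M"
  unfolding goodm_def
proof (intro allI impI)
  fix Y :: "('a \<Rightarrow> complex) set" assume Y: "Y \<subseteq> torus"
  have "card (pre (E ** M) Y) = card (pre M Y)"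
    using assms(1,2) pre_torus[of M Y] unfolding pre_mult goodm_def by simp
  moreover have "card (pre (E ** M) Y) = nat \<bar>det M\<bar> * card Y"
    using assms(2,3) Y unfolding goodm_def by (simp add: det_mul abs_mult)
  ultimately show "card (pre M Y) = nat \<bar>det M\<bar> * card Y" by simp
qed

lemma card_fibers:
  assumes img: "f ` A = B" and fib: "\<And>b. b \<in> B \<Longrightarrow> card {a\<in>A. f a = b} = m" and m: "m > 0"
  shows "card A = m * card B"
proof (cases "finite B")
  case True
  have A: "A = (\<Union>b\<in>B. {a\<in>A. f a = b})" using img by blast
  have fin: "finite {a\<in>A. f a = b}" if b: "b \<in> B" for b
  proof (rule ccontr)
    assume "infinite {a\<in>A. f a = b}"
    then have "card {a\<in>A. f a = b} = 0" by (rule card.infinite)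
    then show False using fib[OF b] m by simp
  qed
  have disj: "\<forall>b\<in>B. \<forall>b'\<in>B. b \<noteq> b' \<longrightarrow> {a\<in>A. f a = b} \<inter> {a\<in>A. f a = b'} = {}"
    by blast
  have "card A = (\<Sum>b\<in>B. card {a\<in>A. f a = b})"
    by (subst A, rule card_UN_disjoint[OF True]) (use fin disj in blast)+
  also have "\<dots> = m * card B" using fib by simp
  finally show ?thesis .
next
  case False
  have "infinite A"
  proof
    assume "finite A"
    then have "finite (f ` A)" by simp
    then show False using False img by simp
  qed
  then show ?thesis using False by simp
qed

definition rowmat :: "'n \<Rightarrow> ('n \<Rightarrow> int) \<Rightarrow> int^'n^'n" where
  "rowmat k r = (\<chi> i j. (if i = j then 1 else 0) + (if i = k \<and> j \<noteq> k then r j else 0))"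

definition dg :: "'n \<Rightarrow> int \<Rightarrow> int^'n^'n" where
  "dg k g = (\<chi> i j. if i = j then (if i = k then g else 1) else 0)"

lemma det_rowtype:
  fixes A :: "'a::comm_ring_1^'n::finite^'n"
  assumes ld: "\<And>i j. i \<noteq> j \<Longrightarrow> i \<noteq> k \<Longrightarrow> A$i$j = 0"
  shows "det A = prod (\<lambda>i. A$i$i) (UNIV::'n set)"
proof -
  let ?U = "UNIV:: 'n set"
  let ?PU = "{p. p permutes ?U}"
  let ?pp = "\<lambda>p. of_int (sign p) * prod (\<lambda>i. A$i$p i) (UNIV :: 'n set)"
  have fU: "finite ?U" by simp
  from finite_permutations[OF fU] have fPU: "finite ?PU" .
  have id0: "{id} \<subseteq> ?PU"
    by (auto simp: permutes_id)
  have p0: "\<forall>p \<in> ?PU - {id}. ?pp p = 0"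
  proof
    fix p
    assume p: "p \<in> ?PU - {id}"
    then obtain i where i: "p i \<noteq> i"
      by fastforce
    have "\<exists>i. p i \<noteq> i \<and> i \<noteq> k"
    proof (cases "i = k")
      case True
      have pinj: "inj p" using p by (auto dest: permutes_inj)
      have "p (p i) \<noteq> p i" using i pinj by (metis injD)
      moreover have "p i \<noteq> k" using i True by simp
      ultimately show ?thesis by blast
    next
      case False then show ?thesis using i by blast
    qed
    then obtain j where "p j \<noteq> j" "j \<noteq> k" by blast
    with ld have "\<exists>i \<in> ?U. A$i$p i = 0"
      by (metis UNIV_I)
    with prod_zero [OF fU] show "?pp p = 0"
      by force
  qed
  from sum.mono_neutral_cong_left[OF fPU id0 p0] show ?thesis
    unfolding det_def by (simp add: sign_id)
qed

lemma det_rowmat: "det (rowmat k r) = 1"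
  by (subst det_rowtype[where k=k]) (auto simp: rowmat_def)

lemma det_dg: "det (dg k g) = g"
  by (subst det_diagonal) (auto simp: dg_def prod.delta)

lemma star_rowmat:
  assumes t: "t \<in> torus"
  shows "star (rowmat k r) t = (\<lambda>j. if j = k then t k else t j * t k powi r j)"
proof
  fix j
  have "\<And>i. t i powi (rowmat k r $ i $ j) = (if i = j then t j else 1) * (if i = k then (if j = k then 1 else t k powi r j) else 1)"
    using torus_nz[OF t] by (auto simp: rowmat_def power_int_add)
  then have "star (rowmat k r) t j = (\<Prod>i\<in>UNIV. (if i = j then t j else 1) * (if i = k then (if j = k then 1 else t k powi r j) else 1))"
    unfolding star_def by simp
  also have "\<dots> = t j * (if j = k then 1 else t k powi r j)"
    by (simp add: prod.distrib prod.delta)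
  finally show "star (rowmat k r) t j = (if j = k then t k else t j * t k powi r j)"
    by auto
qed

lemma star_dg:
  assumes t: "t \<in> torus"
  shows "star (dg k g) t = t(k := t k powi g)"
proof
  fix j
  have "\<And>i. t i powi (dg k g $ i $ j) = (if i = j then (if j = k then t k powi g else t j) else 1)"
    by (auto simp: dg_def)
  then show "star (dg k g) t j = (t(k := t k powi g)) j"
    unfolding star_def by (simp add: prod.delta)
qed

lemma goodm_rowmat: "goodm (rowmat k r)"
  unfolding goodm_def det_rowmat
proof (intro allI impI)
  fix Y :: "('a \<Rightarrow> complex) set" assume Y: "Y \<subseteq> torus"
  let ?f = "star (rowmat k r)"
  let ?g = "\<lambda>y. (\<lambda>j. if j = k then y k else y j * y k powi (- r j))"
  have inj: "inj_on ?f (pre (rowmat k r) Y)"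
  proof (rule inj_onI)
    fix x y assume x: "x \<in> pre (rowmat k r) Y" and y: "y \<in> pre (rowmat k r) Y" and e: "?f x = ?f y"
    have xt: "x \<in> torus" and yt: "y \<in> torus" using x y by (auto simp: pre_def)
    have ek: "x k = y k" using fun_cong[OF e, of k] unfolding star_rowmat[OF xt] star_rowmat[OF yt] by simp
    show "x = y"
    proof
      fix j
      show "x j = y j"
      proof (cases "j = k")
        case True then show ?thesis using ek by simp
      next
        case False
        have "x j * x k powi r j = y j * x k powi r j"
          using fun_cong[OF e, of j] False ek unfolding star_rowmat[OF xt] star_rowmat[OF yt] by simp
        moreover have "x k powi r j \<noteq> 0" using torus_nz[OF xt] by simp
        ultimately show ?thesis by (metis mult_cancel_right)
      qed
    qed
  qed
  have img: "?f ` pre (rowmat k r) Y = Y"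
  proof
    show "?f ` pre (rowmat k r) Y \<subseteq> Y" unfolding pre_def by blast
  next
    show "Y \<subseteq> ?f ` pre (rowmat k r) Y"
    proof
      fix y assume y: "y \<in> Y"
      then have yt: "y \<in> torus" using Y by auto
      have gt: "?g y \<in> torus" using yt unfolding torus_def by (simp add: norm_mult norm_power_int)
      have inv: "y k powi (- r j) * y k powi r j = 1" for j
        using torus_nz[OF yt, of k] by (simp add: power_int_minus)
      have "?f (?g y) = y"
      proof
        fix j show "?f (?g y) j = y j"
          unfolding star_rowmat[OF gt] using inv[of j] by (simp add: mult.assoc)
      qed
      then show "y \<in> ?f ` pre (rowmat k r) Y"
        by (rule image_eqI[where x="?g y", OF sym]) (use gt y in \<open>simp add: pre_def \<open>?f (?g y) = y\<close>\<close>)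
    qed
  qed
  show "card (pre (rowmat k r) Y) = nat \<bar>1\<bar> * card Y"
    using bij_betw_same_card[OF bij_betw_imageI[OF inj img]] by simp
qed

lemma card_roots_int:
  assumes c: "(c::complex) \<noteq> 0" and g: "g \<noteq> 0"
  shows "card {z::complex. z powi g = c} = nat \<bar>g\<bar>"
proof (cases "g > 0")
  case True
  have "{z::complex. z powi g = c} = {z. z ^ nat g = c}"
    using True by (auto simp: power_int_def)
  then show ?thesis using card_nth_roots[OF c, of "nat g"] True by simp
next
  case False
  then have gn: "g < 0" using g by simp
  have "z powi g = c \<longleftrightarrow> z ^ nat (-g) = inverse c" for z :: complex
  proof -
    have "z powi g = inverse (z ^ nat (-g))" using gn by (simp add: power_int_def power_inverse)
    then show ?thesis by (metis inverse_inverse_eq)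
  qed
  then have "{z::complex. z powi g = c} = {z. z ^ nat (-g) = inverse c}" by blast
  then show ?thesis using card_nth_roots[of "inverse c" "nat (-g)"] c gn by simp
qed

lemma real_powi_eq_1:
  assumes "(r::real) \<ge> 0" "g \<noteq> 0" "r powi g = 1"
  shows "r = 1"
proof -
  have "r ^ nat \<bar>g\<bar> = 1"
  proof (cases "g \<ge> 0")
    case True then show ?thesis using assms by (simp add: power_int_def)
  next
    case False
    then have "inverse (r ^ nat (-g)) = 1" using assms by (simp add: power_int_def power_inverse)
    then show ?thesis using False by (metis abs_of_neg inverse_1 inverse_inverse_eq not_le)
  qed
  then have "r ^ nat \<bar>g\<bar> = 1 ^ nat \<bar>g\<bar>" by simp
  then show ?thesis using power_eq_imp_eq_base[of r "nat \<bar>g\<bar>" 1] assms by simp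
qed

lemma goodm_dg:
  assumes g: "g \<noteq> 0"
  shows "goodm (dg k g)"
  unfolding goodm_def det_dg
proof (intro allI impI)
  fix Y :: "('a \<Rightarrow> complex) set" assume Y: "Y \<subseteq> torus"
  let ?f = "star (dg k g)"
  have fib: "{t \<in> pre (dg k g) Y. ?f t = y} = (\<lambda>z. y(k := z)) ` {z. z powi g = y k}" if y: "y \<in> Y" for y
  proof
    show "{t \<in> pre (dg k g) Y. ?f t = y} \<subseteq> (\<lambda>z. y(k := z)) ` {z. z powi g = y k}"
    proof
      fix t assume "t \<in> {t \<in> pre (dg k g) Y. ?f t = y}"
      then have tt: "t \<in> torus" and e: "t(k := t k powi g) = y" by (auto simp: pre_def star_dg)
      have "t = y(k := t k)" unfolding e[symmetric] by simp
      moreover have "t k powi g = y k" unfolding e[symmetric] by simp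
      ultimately show "t \<in> (\<lambda>z. y(k := z)) ` {z. z powi g = y k}" by blast
    qed
  next
    show "(\<lambda>z. y(k := z)) ` {z. z powi g = y k} \<subseteq> {t \<in> pre (dg k g) Y. ?f t = y}"
    proof
      fix t assume "t \<in> (\<lambda>z. y(k := z)) ` {z. z powi g = y k}"
      then obtain z where z: "z powi g = y k" and t: "t = y(k := z)" by blast
      have yt: "y \<in> torus" using y Y by auto
      have "norm (y k) = 1" using yt by (simp add: torus_def)
      then have "norm z powi g = 1" using z by (simp add: norm_power_int[symmetric])
      then have "norm z = 1" by (rule real_powi_eq_1[OF norm_ge_zero g])
      then have tt: "t \<in> torus" using yt t by (auto simp: torus_def)
      have "?f t = t(k := t k powi g)" by (rule star_dg[OF tt])
      also have "\<dots> = y" using z t by simp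
      finally have "?f t = y" .
      then show "t \<in> {t \<in> pre (dg k g) Y. ?f t = y}" using tt y by (auto simp: pre_def)
    qed
  qed
  have cf: "card {t \<in> pre (dg k g) Y. ?f t = y} = nat \<bar>g\<bar>" if y: "y \<in> Y" for y
  proof -
    have yt: "y \<in> torus" using y Y by auto
    have "inj (\<lambda>z. y(k := z))" by (rule injI) (metis fun_upd_same)
    then have "card ((\<lambda>z. y(k := z)) ` {z. z powi g = y k}) = card {z. z powi g = y k}"
      by (simp add: card_image inj_on_subset)
    then show ?thesis using fib[OF y] card_roots_int[OF torus_nz[OF yt] g] by simp
  qed
  have img: "?f ` pre (dg k g) Y = Y"
  proof
    show "?f ` pre (dg k g) Y \<subseteq> Y" unfolding pre_def by blast
  next
    show "Y \<subseteq> ?f ` pre (dg k g) Y"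
    proof
      fix y assume y: "y \<in> Y"
      have "{t \<in> pre (dg k g) Y. ?f t = y} \<noteq> {}"
      proof
        assume e: "{t \<in> pre (dg k g) Y. ?f t = y} = {}"
        have "nat \<bar>g\<bar> = 0" using cf[OF y] unfolding e by simp
        then show False using g by simp
      qed
      then show "y \<in> ?f ` pre (dg k g) Y" by blast
    qed
  qed
  show "card (pre (dg k g) Y) = nat \<bar>g\<bar> * card Y"
  proof -
    have m: "nat \<bar>g\<bar> > 0" using g by simp
    show ?thesis by (rule card_fibers[OF img cf m])
  qed
qed

lemma goodm_one: "goodm (mat 1)"
proof -
  have "star (mat 1) t = t" for t :: "'a \<Rightarrow> complex"
    by (auto simp: star_def mat_def if_distrib prod.delta cong: if_cong)
  then have "pre (mat 1) Y = Y" if "Y \<subseteq> torus" for Y :: "('a \<Rightarrow> complex) set"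
    using that by (auto simp: pre_def)
  then show ?thesis unfolding goodm_def by simp
qed



definition suppK :: "'n set \<Rightarrow> int^'n^'n \<Rightarrow> bool" where
  "suppK K M \<longleftrightarrow> (\<forall>i j. (i \<notin> K \<or> j \<notin> K) \<longrightarrow> M$i$j = (if i = j then 1 else 0))"

lemma rowop_entry:
  assumes ab: "a \<noteq> b"
  shows "(rowmat a (\<lambda>l. if l = b then c else 0) ** M)$i$j = M$i$j + (if i = a then c * M$b$j else 0)"
proof -
  have "rowmat a (\<lambda>l. if l = b then c else 0) $ i $ l * M$l$j
      = (if l = i then M$i$j else 0) + (if l = b then (if i = a then c * M$b$j else 0) else 0)" for l
    using ab by (auto simp: rowmat_def)
  then show ?thesis
    unfolding matrix_matrix_mult_def by (simp add: sum.distrib)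
qed

lemma suppK_rowop:
  assumes "suppK K M" "a \<in> K" "b \<in> K" "a \<noteq> b"
  shows "suppK K (rowmat a (\<lambda>l. if l = b then c else 0) ** M)"
  unfolding suppK_def
proof (intro allI impI)
  fix i j assume ij: "i \<notin> K \<or> j \<notin> K"
  show "(rowmat a (\<lambda>l. if l = b then c else 0) ** M)$i$j = (if i = j then 1 else 0)"
  proof (cases "i = a")
    case True
    then have "j \<notin> K" using ij assms(2) by auto
    then have "M$b$j = 0" "M$i$j = (if i = j then 1 else 0)"
      using assms(1,3) ij unfolding suppK_def by (auto split: if_splits)
    then show ?thesis unfolding rowop_entry[OF assms(4)] by simp
  next
    case False
    then show ?thesis unfolding rowop_entry[OF assms(4)] using assms(1) ij unfolding suppK_def by simp
  qed
qed

lemma goodm_elem: "goodm (rowmat a (\<lambda>l. if l = b then c else 0))"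
  by (rule goodm_rowmat)

lemma suppK_col:
  assumes "suppK K M" "M$i$k \<noteq> 0" "k \<in> K"
  shows "i \<in> K"
  using assms unfolding suppK_def by (metis (full_types))

lemma euclid:
  assumes k: "k \<in> K"
  shows "suppK K M \<Longrightarrow> det M \<noteq> 0 \<Longrightarrow>
    \<exists>E. goodm E \<and> \<bar>det E\<bar> = 1 \<and> suppK K (E ** M) \<and> (\<forall>i. i \<noteq> k \<longrightarrow> (E ** M)$i$k = 0)"
proof (induction "\<Sum>i\<in>UNIV. nat \<bar>M$i$k\<bar>" arbitrary: M rule: less_induct)
  case less
  note sK = less.prems(1) and dM = less.prems(2)
  show ?case
  proof (cases "\<forall>i. i \<noteq> k \<longrightarrow> M$i$k = 0")
    case True
    then show ?thesis using sK goodm_one by (intro exI[of _ "mat 1"]) (simp add: matrix_mul_lid)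
  next
    case False
    then obtain i where i: "i \<noteq> k" "M$i$k \<noteq> 0" by blast
    have iK: "i \<in> K" using suppK_col[OF sK i(2) k] .
    show ?thesis
    proof (cases "\<exists>j. j \<noteq> i \<and> M$j$k \<noteq> 0")
      case True
      then obtain j where j: "j \<noteq> i" "M$j$k \<noteq> 0" by blast
      have jK: "j \<in> K" using suppK_col[OF sK j(2) k] .
      obtain a b where ab: "a \<noteq> b" "a \<in> K" "b \<in> K" "M$a$k \<noteq> 0" "M$b$k \<noteq> 0" "\<bar>M$b$k\<bar> \<le> \<bar>M$a$k\<bar>"
      proof (cases "\<bar>M$j$k\<bar> \<le> \<bar>M$i$k\<bar>")
        case True
        then show ?thesis using that[of i j] i j iK jK by auto
      next
        case False
        then show ?thesis using that[of j i] i j iK jK by auto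
      qed
      define c where "c = - (sgn (M$a$k) * sgn (M$b$k))"
      define R where "R = rowmat a (\<lambda>l. if l = b then c else 0)"
      define M2 where "M2 = R ** M"
      have e2: "M2$l$k = M$l$k + (if l = a then c * M$b$k else 0)" for l
        unfolding M2_def R_def by (rule rowop_entry[OF ab(1)])
      have ea: "\<bar>M$a$k + c * M$b$k\<bar> = \<bar>M$a$k\<bar> - \<bar>M$b$k\<bar>"
        using ab(4,5,6) unfolding c_def
        by (cases "M$a$k > 0"; cases "M$b$k > 0") (auto simp: abs_if sgn_if)
      have lt: "(\<Sum>l\<in>UNIV. nat \<bar>M2$l$k\<bar>) < (\<Sum>l\<in>UNIV. nat \<bar>M$l$k\<bar>)"
      proof (rule sum_strict_mono_ex1)
        show "\<forall>l\<in>UNIV. nat \<bar>M2$l$k\<bar> \<le> nat \<bar>M$l$k\<bar>"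
          using ea by (auto simp: e2)
        show "\<exists>l\<in>UNIV. nat \<bar>M2$l$k\<bar> < nat \<bar>M$l$k\<bar>"
          using ea ab(5) by (intro bexI[of _ a]) (auto simp: e2)
      qed simp
      have s2: "suppK K M2" unfolding M2_def R_def by (rule suppK_rowop[OF sK ab(2,3,1)])
      have d2: "det M2 = det M" unfolding M2_def R_def by (simp add: det_mul det_rowmat)
      obtain E2 where E2: "goodm E2" "\<bar>det E2\<bar> = 1" "suppK K (E2 ** M2)" "\<forall>i. i \<noteq> k \<longrightarrow> (E2 ** M2)$i$k = 0"
        using less.hyps[OF lt s2] dM d2 by auto
      have "E2 ** M2 = (E2 ** R) ** M" unfolding M2_def by (simp add: matrix_mul_assoc)
      moreover have "goodm (E2 ** R)" unfolding R_def by (rule goodm_mult[OF E2(1) goodm_rowmat])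
      moreover have "\<bar>det (E2 ** R)\<bar> = 1" using E2(2) unfolding R_def by (simp add: det_mul det_rowmat)
      ultimately show ?thesis using E2(3,4) by (intro exI[of _ "E2 ** R"]) simp
    next
      case False
      then have z: "\<And>j. j \<noteq> i \<Longrightarrow> M$j$k = 0" by blast
      have ik: "k \<noteq> i" using i(1) by simp
      define R1 where "R1 = rowmat k (\<lambda>l. if l = i then 1 else 0)"
      define M1 where "M1 = R1 ** M"
      define R2 where "R2 = rowmat i (\<lambda>l. if l = k then - 1 else 0)"
      define M2 where "M2 = R2 ** M1"
      have e1: "M1$l$k = M$l$k + (if l = k then 1 * M$i$k else 0)" for l
        unfolding M1_def R1_def by (rule rowop_entry[OF ik])
      have e2: "M2$l$k = M1$l$k + (if l = i then - 1 * M1$k$k else 0)" for l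
        unfolding M2_def R2_def by (rule rowop_entry[OF i(1)])
      have col: "\<forall>l. l \<noteq> k \<longrightarrow> M2$l$k = 0"
        using z i(1) by (auto simp: e1 e2)
      have s1: "suppK K M1" unfolding M1_def R1_def by (rule suppK_rowop[OF sK k iK ik])
      have s2: "suppK K M2" unfolding M2_def R2_def by (rule suppK_rowop[OF s1 iK k i(1)])
      have "M2 = (R2 ** R1) ** M" unfolding M2_def M1_def by (simp add: matrix_mul_assoc)
      moreover have "goodm (R2 ** R1)" unfolding R1_def R2_def by (rule goodm_mult[OF goodm_rowmat goodm_rowmat])
      moreover have "\<bar>det (R2 ** R1)\<bar> = 1" unfolding R1_def R2_def by (simp add: det_mul det_rowmat)
      ultimately show ?thesis using s2 col by (intro exI[of _ "R2 ** R1"]) simp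
    qed
  qed
qed

lemma mult_dg_entry: "(A ** dg k g)$i$j = A$i$j * (if j = k then g else 1)"
proof -
  have "A$i$l * dg k g $ l $ j = (if l = j then A$i$j * (if j = k then g else 1) else 0)" for l
    by (auto simp: dg_def)
  then show ?thesis unfolding matrix_matrix_mult_def by simp
qed

lemma goodm_supp: "finite K \<Longrightarrow> suppK K M \<Longrightarrow> det M \<noteq> 0 \<Longrightarrow> goodm M"
proof (induction K arbitrary: M rule: finite_induct)
  case empty
  then have "M = mat 1" unfolding suppK_def by (simp add: vec_eq_iff mat_def)
  then show ?case using goodm_one by simp
next
  case (insert k K)
  obtain E where E: "goodm E" "\<bar>det E\<bar> = 1" "suppK (insert k K) (E ** M)" "\<forall>i. i \<noteq> k \<longrightarrow> (E ** M)$i$k = 0"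
    using euclid[of k "insert k K" M] insert.prems by auto
  define M1 where "M1 = E ** M"
  have s1: "suppK (insert k K) M1" and c1: "\<And>i. i \<noteq> k \<Longrightarrow> M1$i$k = 0"
    using E unfolding M1_def by auto
  have d1: "det M1 \<noteq> 0" unfolding M1_def using E(2) insert.prems(2) by (simp add: det_mul abs_mult)
  define g where "g = M1$k$k"
  have g: "g \<noteq> 0"
  proof
    assume "g = 0"
    then have "M1$i$k = 0" for i using c1[of i] unfolding g_def by (cases "i = k") auto
    then have "column k M1 = 0" by (simp add: column_def vec_eq_iff)
    then have "det M1 = 0" by (rule det_zero_column(1))
    then show False using d1 by simp
  qed
  define M' where "M' = (\<chi> i j. if i = k \<or> j = k then (if i = j then 1 else 0) else M1$i$j)"
  define U where "U = rowmat k (\<lambda>j. M1$k$j)"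
  define X where "X = U ** dg k g"
  have X: "X$l$j = U$l$j * (if j = k then g else 1)" for l j unfolding X_def by (rule mult_dg_entry)
  have eq: "M1 = M' ** X"
  proof -
    have "(M' ** X)$i$j = M1$i$j" for i j
    proof (cases "i = k")
      case True
      have "M'$i$l * X$l$j = (if l = k then X$k$j else 0)" for l
        using True by (auto simp: M'_def)
      then have "(M' ** X)$i$j = X$k$j" unfolding matrix_matrix_mult_def by simp
      also have "\<dots> = M1$i$j" using True by (auto simp: X U_def rowmat_def g_def)
      finally show ?thesis .
    next
      case False
      have "M'$i$l * X$l$j = (if l = j then (if j = k then 0 else M1$i$j) else 0)" for l
        using False by (auto simp: M'_def X U_def rowmat_def)
      then have "(M' ** X)$i$j = (if j = k then 0 else M1$i$j)" unfolding matrix_matrix_mult_def by simp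
      also have "\<dots> = M1$i$j" using False c1 by auto
      finally show ?thesis .
    qed
    then show ?thesis by (simp add: vec_eq_iff)
  qed
  have sM': "suppK K M'"
    unfolding suppK_def
  proof (intro allI impI)
    fix i j assume "i \<notin> K \<or> j \<notin> K"
    then show "M'$i$j = (if i = j then 1 else 0)"
      using s1 unfolding M'_def suppK_def by auto
  qed
  have "det M1 = det M' * g" unfolding eq X_def by (simp add: det_mul det_rowmat U_def det_dg)
  then have "det M' \<noteq> 0" using d1 by auto
  then have gM': "goodm M'" using insert.IH sM' by blast
  have "goodm (U ** dg k g)" unfolding U_def by (rule goodm_mult[OF goodm_rowmat goodm_dg[OF g]])
  then have "goodm (M' ** X)" unfolding X_def by (rule goodm_mult[OF gM'])
  then have "goodm (E ** M)" using eq unfolding M1_def by simp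
  then show ?case by (rule goodm_cancel[OF E(1,2)])
qed

lemma goodm_det: "det M \<noteq> 0 \<Longrightarrow> goodm (M :: int^'n::finite^'n)"
  by (rule goodm_supp[of UNIV]) (auto simp: suppK_def)



definition chr :: "('n::finite \<Rightarrow> complex) \<Rightarrow> int^'n \<Rightarrow> complex" where
  "chr t h = (\<Prod>j\<in>UNIV. t j powi (h$j))"

definition Xs :: "(int^'n::finite) set \<Rightarrow> ('n \<Rightarrow> complex) set" where
  "Xs H = {t \<in> torus. \<forall>h\<in>H. chr t h = 1}"

lemma chr_add:
  assumes t: "t \<in> torus"
  shows "chr t (x + y) = chr t x * chr t y"
proof -
  have "t j powi (x$j + y$j) = t j powi (x$j) * t j powi (y$j)" for j
    using torus_nz[OF t] by (simp add: power_int_add)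
  then show ?thesis by (simp add: chr_def prod.distrib)
qed

lemma chr_zero[simp]: "chr t 0 = 1"
  unfolding chr_def by simp

lemma chr_axis: "chr t (axis j 1) = t j"
proof -
  have "t l powi (axis j 1 $ l) = (if l = j then t j else 1)" for l
    by (simp add: axis_def)
  then show ?thesis unfolding chr_def by (simp add: prod.delta)
qed

lemma chr_norm: "t \<in> torus \<Longrightarrow> norm (chr t x) = 1"
  unfolding chr_def torus_def by (simp add: prod_norm[symmetric] norm_power_int)

lemma chr_mat:
  assumes t: "t \<in> torus"
  shows "chr t (M *v h) = chr (star M t) h"
proof -
  have "chr t (M *v h) = (\<Prod>i\<in>UNIV. \<Prod>j\<in>UNIV. t i powi (M$i$j * h$j))"
    unfolding chr_def matrix_vector_mult_def using torus_nz[OF t] by (simp add: power_int_sum)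
  also have "\<dots> = (\<Prod>j\<in>UNIV. \<Prod>i\<in>UNIV. t i powi (M$i$j * h$j))"
    by (rule prod.swap)
  also have "\<dots> = chr (star M t) h"
    unfolding chr_def star_def by (simp add: power_int_prod power_int_mult)
  finally show ?thesis .
qed

lemma chr_cong:
  assumes t: "t \<in> Xs H" and d: "a - b \<in> H"
  shows "chr t a = chr t b"
proof -
  have tt: "t \<in> torus" using t by (simp add: Xs_def)
  have "chr t a = chr t (b + (a - b))" by simp
  also have "\<dots> = chr t b * chr t (a - b)" by (rule chr_add[OF tt])
  also have "chr t (a - b) = 1" using t d by (simp add: Xs_def)
  finally show ?thesis by simp
qed

lemma Xs_torus: "Xs H \<subseteq> torus"
  unfolding Xs_def by auto

context addhom
begin

lemma Xs_image: "Xs (\<sigma> ` H) = pre (hom_matrix \<sigma>) (Xs H)"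
proof -
  have "chr t (\<sigma> h) = chr (star (hom_matrix \<sigma>) t) h" if "t \<in> torus" for t h
    using chr_mat[OF that, of "hom_matrix \<sigma>" h] by (simp only: matrix_eq[symmetric])
  note eq = this
  show ?thesis
  proof (rule set_eqI)
    fix t
    show "t \<in> Xs (\<sigma> ` H) \<longleftrightarrow> t \<in> pre (hom_matrix \<sigma>) (Xs H)"
    proof (cases "t \<in> torus")
      case True
      then show ?thesis using eq[OF True] star_torus[OF True] by (simp add: Xs_def pre_def)
    next
      case False then show ?thesis by (simp add: Xs_def pre_def)
    qed
  qed
qed

lemma card_Xs_image:
  assumes d: "det (hom_matrix \<sigma>) \<noteq> 0"
  shows "card (Xs (\<sigma> ` H)) = nat \<bar>det (hom_matrix \<sigma>)\<bar> * card (Xs H)"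
  using goodm_det[OF d] Xs_torus[of H] unfolding Xs_image goodm_def by blast

end

section \<open>Cosets\<close>

lemma coset_self: "subg H \<Longrightarrow> y \<in> coset H y"
  unfolding coset_def subg_def by force

lemma coset_eqD:
  assumes H: "subg H" and e: "coset H x = coset H y"
  shows "x - y \<in> H"
proof -
  have "y \<in> coset H x" using coset_self[OF H, of y] e by simp
  then obtain h where h: "h \<in> H" "y = x + h" unfolding coset_def by blast
  then have "x - y = - h" by simp
  then show ?thesis using subg_neg[OF H h(1)] by simp
qed

lemma coset_eqI:
  assumes H: "subg H" and d: "x - y \<in> H"
  shows "coset H x = coset H y"
proof
  show "coset H x \<subseteq> coset H y"
  proof
    fix z assume "z \<in> coset H x"
    then obtain h where h: "h \<in> H" "z = x + h" unfolding coset_def by blast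
    have "(x - y) + h \<in> H" using H d h(1) unfolding subg_def by blast
    moreover have "z = y + ((x - y) + h)" using h(2) by simp
    ultimately show "z \<in> coset H y" unfolding coset_def by blast
  qed
next
  show "coset H y \<subseteq> coset H x"
  proof
    fix z assume "z \<in> coset H y"
    then obtain h where h: "h \<in> H" "z = y + h" unfolding coset_def by blast
    have "- (x - y) + h \<in> H" using H subg_neg[OF H d] h(1) unfolding subg_def by blast
    moreover have "z = x + (- (x - y) + h)" using h(2) by simp
    ultimately show "z \<in> coset H x" unfolding coset_def by blast
  qed
qed

lemma tor_quot_full:
  assumes "\<And>x. \<exists>k>0. k *s x \<in> H"
  shows "coset H x \<in> tor_quot H"
  using assms[of x] unfolding tor_quot_def by blast

section \<open>Homomorphisms\<close>

lemma G_op_fst: "fst (G_op a b) i = fst a i * fst b i"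
  by (simp add: G_op_def)

lemma G_op_snd: "snd (G_op a b) i = snd a i + snd b i"
  by (simp add: G_op_def)

locale fullsub =
  fixes H :: "(int^'n::finite) set"
  assumes subg: "subg H" and full: "\<And>x. \<exists>k>0. k *s x \<in> H"
begin

lemma inq: "coset H x \<in> tor_quot H"
  by (rule tor_quot_full[OF full])

lemma tor_quot_eq: "tor_quot H = range (coset H)"
  unfolding tor_quot_def using full by blast

definition Fm :: "nat \<Rightarrow> ((int ^ 'n) set \<Rightarrow> (nat \<Rightarrow> complex) \<times> (nat \<Rightarrow> real)) \<Rightarrow> nat \<Rightarrow> 'n \<Rightarrow> complex" where
  "Fm p \<phi> = (\<lambda>i\<in>{..<p}. \<lambda>j. fst (\<phi> (coset H (axis j 1))) i)"

lemma hom_structure: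
  assumes phi: "\<phi> \<in> hom_tor H p q"
  shows "\<phi> (coset H x) = ((\<lambda>i. if i < p then chr (\<lambda>j. fst (\<phi> (coset H (axis j 1))) i) x else 1), (\<lambda>i. 0))"
    and "i < p \<Longrightarrow> norm (fst (\<phi> (coset H x)) i) = 1"
    and "h \<in> H \<Longrightarrow> \<phi> (coset H h) = \<phi> (coset H 0)"
    and "\<phi> (coset H 0) = ((\<lambda>i. 1), (\<lambda>i. 0))"
proof -
  define \<psi> where "\<psi> x = \<phi> (coset H x)" for x
  have hom: "\<psi> (x + y) = G_op (\<psi> x) (\<psi> y)" for x y
    using phi inq unfolding hom_tor_def \<psi>_def by blast
  have car: "\<psi> x \<in> G_carrier p q" for x
    using phi inq unfolding hom_tor_def \<psi>_def by blast
  have zmul: "fst (\<psi> (x + y)) i = fst (\<psi> x) i * fst (\<psi> y) i" for x y i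
    using hom by (simp add: G_op_fst)
  have radd: "snd (\<psi> (x + y)) i = snd (\<psi> x) i + snd (\<psi> y) i" for x y i
    using hom by (simp add: G_op_snd)
  have zhi: "fst (\<psi> x) i = 1" if "i \<ge> p" for x i
    using car[of x] that unfolding G_carrier_def by auto
  have znorm: "norm (fst (\<psi> x) i) = 1" if "i < p" for x i
    using car[of x] that unfolding G_carrier_def by auto
  have znz: "fst (\<psi> x) i \<noteq> 0" for x i
  proof (cases "i < p")
    case True then show ?thesis using znorm[OF True, of x] by auto
  next
    case False then show ?thesis using zhi[of i x] by simp
  qed
  have z0: "fst (\<psi> 0) i = 1" for i
  proof -
    have "fst (\<psi> 0) i = fst (\<psi> 0) i * fst (\<psi> 0) i" using zmul[of 0 0 i] by simp
    then show ?thesis using znz[of 0 i] by simp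
  qed
  have r0: "snd (\<psi> 0) i = 0" for i
    using radd[of 0 0 i] by simp
  have psi0: "\<psi> 0 = ((\<lambda>i. 1), (\<lambda>i. 0))"
    using z0 r0 by (simp add: prod_eq_iff fun_eq_iff)
  have psiH: "\<psi> h = \<psi> 0" if "h \<in> H" for h
    unfolding \<psi>_def using coset_eqI[OF subg, of h 0] that by simp
  have rnat: "snd (\<psi> (of_nat n *s x)) i = of_nat n * snd (\<psi> x) i" for n x i
    by (induction n) (simp_all add: r0 smult_Suc radd algebra_simps)
  have rz: "snd (\<psi> x) i = 0" for x i
  proof -
    obtain k where k: "k > 0" "k *s x \<in> H" using full by blast
    have "of_nat (nat k) * snd (\<psi> x) i = snd (\<psi> (of_nat (nat k) *s x)) i" by (rule rnat[symmetric])
    also have "\<dots> = snd (\<psi> (k *s x)) i" using k(1) by simp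
    also have "\<dots> = 0" using psiH[OF k(2)] r0 by simp
    finally show ?thesis using k(1) by simp
  qed
  have znat: "fst (\<psi> (of_nat n *s x)) i = fst (\<psi> x) i ^ n" for n x i
    by (induction n) (simp_all add: z0 smult_Suc zmul)
  have zneg: "fst (\<psi> (- x)) i = inverse (fst (\<psi> x) i)" for x i
  proof -
    have "fst (\<psi> (- x)) i * fst (\<psi> x) i = 1" using zmul[of "-x" x i] z0[of i] by simp
    then show ?thesis using znz[of x i] by (simp add: field_simps)
  qed
  have zint: "fst (\<psi> (k *s x)) i = fst (\<psi> x) i powi k" for k x i
  proof (cases "k \<ge> 0")
    case True
    then show ?thesis using znat[of "nat k" x i] by (simp add: power_int_def)
  next
    case False
    define m where "m = nat (-k)"
    have kk: "k = - of_nat m" using False unfolding m_def by simp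
    have "k *s x = - (of_nat m *s x)" unfolding kk by (simp add: vec_eq_iff)
    then have "fst (\<psi> (k *s x)) i = inverse (fst (\<psi> x) i ^ m)" by (simp add: zneg znat)
    then show ?thesis using False unfolding m_def by (simp add: power_int_def power_inverse)
  qed
  have zsum: "fst (\<psi> (\<Sum>j\<in>S. f j)) i = (\<Prod>j\<in>S. fst (\<psi> (f j)) i)" for S f i
    by (induction S rule: infinite_finite_induct) (simp_all add: z0 zmul)
  have zchr: "fst (\<psi> x) i = chr (\<lambda>j. fst (\<psi> (axis j 1)) i) x" for x i
  proof -
    have "fst (\<psi> x) i = fst (\<psi> (\<Sum>j\<in>UNIV. x$j *s axis j 1)) i"
      using addhom.axis_expand[of "\<lambda>x. x" x] by (simp add: addhom_def)
    also have "\<dots> = (\<Prod>j\<in>UNIV. fst (\<psi> (axis j 1)) i powi (x$j))"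
      by (simp add: zsum zint)
    finally show ?thesis unfolding chr_def .
  qed
  have A: "fst (\<psi> x) i = (if i < p then chr (\<lambda>j. fst (\<psi> (axis j 1)) i) x else 1)" for i
  proof (cases "i < p")
    case True
    show ?thesis by (subst if_P[OF True]) (rule zchr)
  next
    case False
    show ?thesis by (subst if_not_P[OF False]) (rule zhi, use False in simp)
  qed
  have "\<psi> x = ((\<lambda>i. if i < p then chr (\<lambda>j. fst (\<psi> (axis j 1)) i) x else 1), (\<lambda>i. 0))"
  proof (rule prod_eqI)
    show "fst (\<psi> x) = fst ((\<lambda>i. if i < p then chr (\<lambda>j. fst (\<psi> (axis j 1)) i) x else 1), (\<lambda>i::nat. 0::real))"
      by (rule ext) (simp only: fst_conv A)
    show "snd (\<psi> x) = snd ((\<lambda>i. if i < p then chr (\<lambda>j. fst (\<psi> (axis j 1)) i) x else 1), (\<lambda>i::nat. 0::real))"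
      by (rule ext) (simp only: snd_conv rz)
  qed
  then show "\<phi> (coset H x) = ((\<lambda>i. if i < p then chr (\<lambda>j. fst (\<phi> (coset H (axis j 1))) i) x else 1), (\<lambda>i. 0))"
    unfolding \<psi>_def .
  show "i < p \<Longrightarrow> norm (fst (\<phi> (coset H x)) i) = 1" using znorm unfolding \<psi>_def by simp
  show "h \<in> H \<Longrightarrow> \<phi> (coset H h) = \<phi> (coset H 0)" using psiH unfolding \<psi>_def by simp
  show "\<phi> (coset H 0) = ((\<lambda>i. 1), (\<lambda>i. 0))" using psi0 unfolding \<psi>_def by simp
qed


lemma Fm_in:
  assumes phi: "\<phi> \<in> hom_tor H p q"
  shows "Fm p \<phi> \<in> PiE {..<p} (\<lambda>_. Xs H)"
  unfolding Fm_def
proof (rule restrict_PiE_iff[THEN iffD2], intro ballI)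
  fix i assume i: "i \<in> {..<p}"
  let ?t = "\<lambda>j. fst (\<phi> (coset H (axis j 1))) i"
  have tt: "?t \<in> torus" unfolding torus_def using hom_structure(2)[OF phi] i by simp
  have "chr ?t h = 1" if h: "h \<in> H" for h
  proof -
    have "chr ?t h = fst (\<phi> (coset H h)) i"
      using i by (subst hom_structure(1)[OF phi, of h]) simp
    also have "\<dots> = 1" using hom_structure(3,4)[OF phi] h by simp
    finally show ?thesis .
  qed
  then show "?t \<in> Xs H" using tt unfolding Xs_def by blast
qed

lemma Fm_inj: "inj_on (Fm p) (hom_tor H p q)"
proof (rule inj_onI)
  fix \<phi>1 \<phi>2 assume p1: "\<phi>1 \<in> hom_tor H p q" and p2: "\<phi>2 \<in> hom_tor H p q" and e: "Fm p \<phi>1 = Fm p \<phi>2"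
  have ei: "(\<lambda>j. fst (\<phi>1 (coset H (axis j 1))) i) = (\<lambda>j. fst (\<phi>2 (coset H (axis j 1))) i)" if "i < p" for i
    using fun_cong[OF e, of i] that unfolding Fm_def by simp
  show "\<phi>1 = \<phi>2"
  proof
    fix c
    show "\<phi>1 c = \<phi>2 c"
    proof (cases "c \<in> tor_quot H")
      case True
      then obtain x where x: "c = coset H x" unfolding tor_quot_eq by blast
      have "(\<lambda>i. if i < p then chr (\<lambda>j. fst (\<phi>1 (coset H (axis j 1))) i) x else 1)
          = (\<lambda>i. if i < p then chr (\<lambda>j. fst (\<phi>2 (coset H (axis j 1))) i) x else 1)"
      proof
        fix i show "(if i < p then chr (\<lambda>j. fst (\<phi>1 (coset H (axis j 1))) i) x else 1)
          = (if i < p then chr (\<lambda>j. fst (\<phi>2 (coset H (axis j 1))) i) x else 1)"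
          using ei[of i] by (cases "i < p") simp_all
      qed
      then show ?thesis unfolding x hom_structure(1)[OF p1, of x] hom_structure(1)[OF p2, of x] by simp
    next
      case False
      have e1: "\<phi>1 \<in> extensional (tor_quot H)"
        using p1 unfolding hom_tor_def mem_Collect_eq by (rule conjunct1)
      have e2: "\<phi>2 \<in> extensional (tor_quot H)"
        using p2 unfolding hom_tor_def mem_Collect_eq by (rule conjunct1)
      show ?thesis using extensional_arb[OF e1 False] extensional_arb[OF e2 False] by simp
    qed
  qed
qed

lemma Fm_surj:
  assumes T: "T \<in> PiE {..<p} (\<lambda>_. Xs H)"
  shows "T \<in> Fm p ` hom_tor H p q"
proof -
  define rep where "rep c = (SOME x. c = coset H x)" for c
  define \<phi> where "\<phi> c = (if c \<in> tor_quot H then ((\<lambda>i. if i < p then chr (T i) (rep c) else 1), (\<lambda>i::nat. 0::real)) else undefined)" for c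
  have TX: "T i \<in> Xs H" if "i < p" for i using T that by auto
  have key: "\<phi> (coset H y) = ((\<lambda>i. if i < p then chr (T i) y else 1), (\<lambda>i. 0))" for y
  proof -
    have ex: "\<exists>x. coset H y = coset H x" by blast
    have r: "coset H y = coset H (rep (coset H y))" unfolding rep_def by (rule someI_ex[OF ex])
    have d: "y - rep (coset H y) \<in> H" by (rule coset_eqD[OF subg r])
    have "chr (T i) (rep (coset H y)) = chr (T i) y" if "i < p" for i
      using chr_cong[OF TX[OF that] d] by simp
    then have "(\<lambda>i. if i < p then chr (T i) (rep (coset H y)) else 1) = (\<lambda>i. if i < p then chr (T i) y else 1)"
      by (intro ext) simp
    then show ?thesis unfolding \<phi>_def using inq[of y] by simp
  qed
  have tt: "T i \<in> torus" if "i < p" for i using TX[OF that] Xs_torus by blast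
  have hom: "\<phi> \<in> hom_tor H p q"
    unfolding hom_tor_def
  proof (intro CollectI conjI ballI allI impI)
    show "\<phi> \<in> extensional (tor_quot H)" unfolding \<phi>_def extensional_def by simp
  next
    fix c assume "c \<in> tor_quot H"
    then obtain y where y: "c = coset H y" unfolding tor_quot_eq by blast
    show "\<phi> c \<in> G_carrier p q"
      unfolding y key G_carrier_def using chr_norm[OF tt] by simp
  next
    fix x y
    have "(\<lambda>i. if i < p then chr (T i) (x + y) else 1) = (\<lambda>i. (if i < p then chr (T i) x else 1) * (if i < p then chr (T i) y else 1))"
      by (intro ext) (simp add: chr_add[OF tt])
    then show "\<phi> (coset H (x + y)) = G_op (\<phi> (coset H x)) (\<phi> (coset H y))"
      unfolding key G_op_def by simp
  qed
  have "Fm p \<phi> = T"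
  proof
    fix i
    show "Fm p \<phi> i = T i"
    proof (cases "i < p")
      case True
      have "Fm p \<phi> i = (\<lambda>j. chr (T i) (axis j 1))" using True unfolding Fm_def key by simp
      also have "\<dots> = T i" by (simp add: chr_axis)
      finally show ?thesis .
    next
      case False
      have "T i = undefined" by (rule PiE_arb[OF T]) (use False in simp)
      moreover have "Fm p \<phi> i = undefined" unfolding Fm_def using False by simp
      ultimately show ?thesis by simp
    qed
  qed
  then show ?thesis using hom by blast
qed

lemma card_hom_tor: "card (hom_tor H p q) = card (Xs H) ^ p"
proof -
  have "Fm p ` hom_tor H p q = PiE {..<p} (\<lambda>_. Xs H)"
    using Fm_in Fm_surj by blast
  then have "bij_betw (Fm p) (hom_tor H p q) (PiE {..<p} (\<lambda>_. Xs H))"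
    by (rule bij_betw_imageI[OF Fm_inj])
  then have "card (hom_tor H p q) = card (PiE {..<p} (\<lambda>_. Xs H))"
    by (rule bij_betw_same_card)
  also have "\<dots> = card (Xs H) ^ p" by (simp add: card_PiE)
  finally show ?thesis .
qed

end



lemma poly_char0:
  "poly (char_poly_G p q (A :: (int^'n::finite) list)) 0 =
   (\<Sum>S\<in>Pow {..<length A}. (if zrank (gen_sub A S) = CARD('n) then (-1) ^ card S * int (mult_G A S p q) else 0))"
proof -
  have "poly (monom ((-1) ^ card S * int (mult_G A S p q)) (zrank (UNIV :: (int^'n) set) - zrank (gen_sub A S))) 0
      = (if zrank (gen_sub A S) = CARD('n) then (-1) ^ card S * int (mult_G A S p q) else 0)" for S
    using zrank_le[of "gen_sub A S"] by (simp add: poly_monom zrank_UNIV power_0_left)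
  then show ?thesis unfolding char_poly_G_def by (simp add: poly_sum)
qed

lemma (in addhom) gen_sub_map: "gen_sub (map \<sigma> A) S = \<sigma> ` gen_sub A S"
proof -
  have "{map \<sigma> A ! i | i. i \<in> S \<and> i < length (map \<sigma> A)} = \<sigma> ` {A ! i | i. i \<in> S \<and> i < length A}"
  proof
    show "{map \<sigma> A ! i | i. i \<in> S \<and> i < length (map \<sigma> A)} \<subseteq> \<sigma> ` {A ! i | i. i \<in> S \<and> i < length A}"
    proof
      fix x assume "x \<in> {map \<sigma> A ! i | i. i \<in> S \<and> i < length (map \<sigma> A)}"
      then obtain i where i: "x = map \<sigma> A ! i" "i \<in> S" "i < length A" by auto
      then have x: "x = \<sigma> (A ! i)" by simp
      have "A ! i \<in> {A ! i | i. i \<in> S \<and> i < length A}" using i(2,3) by blast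
      then show "x \<in> \<sigma> ` {A ! i | i. i \<in> S \<and> i < length A}" unfolding x by (rule imageI)
    qed
  next
    show "\<sigma> ` {A ! i | i. i \<in> S \<and> i < length A} \<subseteq> {map \<sigma> A ! i | i. i \<in> S \<and> i < length (map \<sigma> A)}"
    proof
      fix x assume "x \<in> \<sigma> ` {A ! i | i. i \<in> S \<and> i < length A}"
      then obtain i where i: "x = \<sigma> (A ! i)" "i \<in> S" "i < length A" by auto
      then have x: "x = map \<sigma> A ! i" by simp
      show "x \<in> {map \<sigma> A ! i | i. i \<in> S \<and> i < length (map \<sigma> A)}"
        unfolding x using i(2,3) by (intro CollectI exI[of _ i]) simp
    qed
  qed
  then show ?thesis unfolding gen_sub_def by (simp add: zspan_image)
qed

theorem mainTheorem7:
  fixes \<sigma> :: "int ^ 'n \<Rightarrow> int ^ 'n"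
    and A :: "(int ^ 'n) list"
    and p q :: nat
  assumes hom: "\<And>x y. \<sigma> (x + y) = \<sigma> x + \<sigma> y"
    and p: "p > 0"
  shows "poly (char_poly_G p q (map \<sigma> A)) 0
       = \<bar>det (hom_matrix \<sigma>)\<bar> ^ p * poly (char_poly_G p q A) 0"
proof -
  interpret addhom \<sigma> using hom by unfold_locales
  let ?d = "det (hom_matrix \<sigma>)"
  let ?n = "CARD('n)"
  let ?t = "\<lambda>B S. (if zrank (gen_sub B S) = ?n then (-1) ^ card S * int (mult_G B S p q) else 0)"
  have L: "poly (char_poly_G p q (map \<sigma> A)) 0 = (\<Sum>S\<in>Pow {..<length A}. ?t (map \<sigma> A) S)"
    using poly_char0[of p q "map \<sigma> A"] by simp
  have R: "poly (char_poly_G p q A) 0 = (\<Sum>S\<in>Pow {..<length A}. ?t A S)"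
    by (rule poly_char0)
  show ?thesis
  proof (cases "?d = 0")
    case True
    have "?t (map \<sigma> A) S = 0" for S
    proof -
      have "zrank (gen_sub (map \<sigma> A) S) \<noteq> ?n"
        unfolding gen_sub_map unfolding gen_sub_def by (rule det0_rank[OF True])
      then show ?thesis by simp
    qed
    then show ?thesis unfolding L using True p by simp
  next
    case False
    have inj: "inj \<sigma>" by (rule det_nz_inj[OF False])
    have trm: "?t (map \<sigma> A) S = \<bar>?d\<bar> ^ p * ?t A S" for S
    proof -
      let ?H = "gen_sub A S"
      have rk: "zrank (gen_sub (map \<sigma> A) S) = zrank ?H"
        unfolding gen_sub_map by (rule zrank_image[OF inj])
      show ?thesis
      proof (cases "zrank ?H = ?n")
        case True
        have sH: "subg ?H" unfolding gen_sub_def by (rule subg_zspan)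
        have sH': "subg (\<sigma> ` ?H)" unfolding gen_sub_def zspan_image[symmetric] by (rule subg_zspan)
        interpret F1: fullsub ?H
          using sH full_torsion[OF sH True] by unfold_locales auto
        interpret F2: fullsub "\<sigma> ` ?H"
          using sH' full_torsion[OF sH'] True zrank_image[OF inj, of ?H] by unfold_locales auto
        have "int (mult_G (map \<sigma> A) S p q) = int (card (Xs (\<sigma> ` ?H)) ^ p)"
          unfolding mult_G_def gen_sub_map F2.card_hom_tor ..
        also have "\<dots> = int ((nat \<bar>?d\<bar> * card (Xs ?H)) ^ p)"
          unfolding card_Xs_image[OF False] ..
        also have "\<dots> = \<bar>?d\<bar> ^ p * int (card (Xs ?H) ^ p)"
          by (simp add: power_mult_distrib)
        also have "\<dots> = \<bar>?d\<bar> ^ p * int (mult_G A S p q)"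
          unfolding mult_G_def F1.card_hom_tor ..
        finally show ?thesis using True rk by (simp add: algebra_simps)
      next
        case False
        then show ?thesis using rk by simp
      qed
    qed
    show ?thesis unfolding L R sum_distrib_left trm ..
  qed
qed


end
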